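(* Let $\Phi$ be the set of formulas of $NOM$, let $\mathcal Q$ be an orthomodular lattice, and let $[\![\cdot]\!]:\Phi\to\mathcal Q$ be a surjective interpretation. If every rule of inference of $NOM$ is sound in this interpretation, then for all formulas $\phi,\psi$: $[\![\phi\wedge\psi]\!]=[\![\phi]\!]\wedge[\![\psi]\!]$, $[\![\phi\rightarrow\psi]\!]=[\![\phi]\!]\rightarrow[\![\psi]\!]$ (Sasaki arrow), and $[\![\neg\phi]\!]=\neg[\![\phi]\!]$.
   Context: The propositional deductive system $NOM$: formulas are built from propositional letters using $\wedge$, $\rightarrow$, $\neg$. Sequents are $\phi_1,\ldots,\phi_n\vdash\psi$ ($n\ge0$) with antecedent a finite ordered sequence. With $\Gamma$ a finite possibly empty sequence of formulas and $\phi,\psi,\chi$ formulas, the rules of $NOM$ are: (assumption) $\Gamma,\phi\vdash\phi$; (cut) $\Gamma\vdash\phi$, $\Gamma,\phi\vdash\psi$ $\Rightarrow$ $\Gamma\vdash\psi$; (paste) $\Gamma\vdash\phi$, $\Gamma\vdash\psi$ $\Rightarrow$ $\Gamma,\phi\vdash\psi$; (compatible exchange) $\Gamma,\phi,\psi\vdash\phi$, $\Gamma,\phi,\psi\vdash\chi$, $\Gamma,\psi,\phi\vdash\psi$ $\Rightarrow$ $\Gamma,\psi,\phi\vdash\chi$; ($\wedge$-intro) $\Gamma\vdash\phi$, $\Gamma\vdash\psi$ $\Rightarrow$ $\Gamma\vdash\phi\wedge\psi$; ($\wedge$-elim) $\Gamma\vdash\phi\wedge\psi$ $\Rightarrow$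 $\Gamma\vdash\phi$ and $\Rightarrow$ $\Gamma\vdash\psi$; ($\rightarrow$-intro) $\Gamma,\phi\vdash\psi$ $\Rightarrow$ $\Gamma\vdash\phi\rightarrow\psi$; ($\rightarrow$-elim) $\Gamma\vdash\phi\rightarrow\psi$ $\Rightarrow$ $\Gamma,\phi\vdash\psi$; (excluded middle) $\Gamma,\phi\vdash\psi$, $\Gamma,\neg\phi\vdash\psi$ $\Rightarrow$ $\Gamma\vdash\psi$; (explosion) $\Gamma\vdash\neg\phi$ $\Rightarrow$ $\Gamma,\phi\vdash\psi$. An orthomodular lattice is a bounded lattice with an order-reversing involution $\neg$ satisfying $a\wedge\neg a=\bot$, $a\vee\neg a=\top$, and $a\le b\Rightarrow a\vee(\neg a\wedge b)=b$. In it, $a\mathbin{\&}b=(a\vee\neg b)\wedge b$ and $a\rightarrow b=\neg a\vee(a\wedge b)$; $\&$ associates to the left and $a_1\mathbin{\&}\cdots\mathbin{\&}a_n=\top$ when $n=0$. An interpretation is any function $[\![\cdot]\!]:\Phi\to\mathcal Q$ into an orthomodular lattice. A sequent $\phi_1,\ldots,\phi_n\vdash\psi$ is true in it if $[\![\phi_1]\!]\mathbin{\&}\cdots\mathbin{\&}[\![\phi_n]\!]\le[\![\psi]\!]$; a rule of inference is sound if, in every instance, its conclusion is true whenever all its premises are true. *)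

theory Defs
  imports Main
begin

class orthomodular_lattice = bounded_lattice + uminus +
  assumes compl_antimono: "x \<le> y \<Longrightarrow> - y \<le> - x"
    and compl_involution: "- (- x) = x"
    and inf_compl_bot: "inf x (- x) = bot"
    and sup_compl_top: "sup x (- x) = top"
    and orthomodular: "x \<le> y \<Longrightarrow> sup x (inf (- x) y) = y"

context orthomodular_lattice
begin

definition sasaki_and :: "'a \<Rightarrow> 'a \<Rightarrow> 'a" where
  "sasaki_and a b = inf (sup a (- b)) b"

definition sasaki_imp :: "'a \<Rightarrow> 'a \<Rightarrow> 'a" where
  "sasaki_imp a b = sup (- a) (inf a b)"

fun sasaki_and_list :: "'a list \<Rightarrow> 'a" where
  "sasaki_and_list [] = top"
| "sasaki_and_list (a # as) = foldl sasaki_and a as"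

end

datatype 'p form =
    Letter 'p
  | FAnd "'p form" "'p form"
  | FImp "'p form" "'p form"
  | FNeg "'p form"

definition seq_true :: "('p form \<Rightarrow> 'a::orthomodular_lattice) \<Rightarrow> 'p form list \<Rightarrow> 'p form \<Rightarrow> bool" where
  "seq_true I \<Gamma> \<psi> \<longleftrightarrow> sasaki_and_list (map I \<Gamma>) \<le> I \<psi>"

definition sound_assumption :: "('p form \<Rightarrow> 'a::orthomodular_lattice) \<Rightarrow> bool" where
  "sound_assumption I \<longleftrightarrow> (\<forall>\<Gamma> \<phi>. seq_true I (\<Gamma> @ [\<phi>]) \<phi>)"

definition sound_cut :: "('p form \<Rightarrow> 'a::orthomodular_lattice) \<Rightarrow> bool" where
  "sound_cut I \<longleftrightarrow> (\<forall>\<Gamma> \<phi> \<psi>. seq_true I \<Gamma> \<phi> \<longrightarrow> seq_true I (\<Gamma> @ [\<phi>]) \<psi> \<longrightarrow> seq_true I \<Gamma> \<psi>)"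

definition sound_paste :: "('p form \<Rightarrow> 'a::orthomodular_lattice) \<Rightarrow> bool" where
  "sound_paste I \<longleftrightarrow> (\<forall>\<Gamma> \<phi> \<psi>. seq_true I \<Gamma> \<phi> \<longrightarrow> seq_true I \<Gamma> \<psi> \<longrightarrow> seq_true I (\<Gamma> @ [\<phi>]) \<psi>)"

definition sound_compat_exchange :: "('p form \<Rightarrow> 'a::orthomodular_lattice) \<Rightarrow> bool" where
  "sound_compat_exchange I \<longleftrightarrow> (\<forall>\<Gamma> \<phi> \<psi> \<chi>.
     seq_true I (\<Gamma> @ [\<phi>, \<psi>]) \<phi> \<longrightarrow> seq_true I (\<Gamma> @ [\<phi>, \<psi>]) \<chi> \<longrightarrow>
     seq_true I (\<Gamma> @ [\<psi>, \<phi>]) \<psi> \<longrightarrow> seq_true I (\<Gamma> @ [\<psi>, \<phi>]) \<chi>)"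

definition sound_and_intro :: "('p form \<Rightarrow> 'a::orthomodular_lattice) \<Rightarrow> bool" where
  "sound_and_intro I \<longleftrightarrow> (\<forall>\<Gamma> \<phi> \<psi>. seq_true I \<Gamma> \<phi> \<longrightarrow> seq_true I \<Gamma> \<psi> \<longrightarrow> seq_true I \<Gamma> (FAnd \<phi> \<psi>))"

definition sound_and_elim :: "('p form \<Rightarrow> 'a::orthomodular_lattice) \<Rightarrow> bool" where
  "sound_and_elim I \<longleftrightarrow> (\<forall>\<Gamma> \<phi> \<psi>. seq_true I \<Gamma> (FAnd \<phi> \<psi>) \<longrightarrow> seq_true I \<Gamma> \<phi> \<and> seq_true I \<Gamma> \<psi>)"

definition sound_imp_intro :: "('p form \<Rightarrow> 'a::orthomodular_lattice) \<Rightarrow> bool" where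
  "sound_imp_intro I \<longleftrightarrow> (\<forall>\<Gamma> \<phi> \<psi>. seq_true I (\<Gamma> @ [\<phi>]) \<psi> \<longrightarrow> seq_true I \<Gamma> (FImp \<phi> \<psi>))"

definition sound_imp_elim :: "('p form \<Rightarrow> 'a::orthomodular_lattice) \<Rightarrow> bool" where
  "sound_imp_elim I \<longleftrightarrow> (\<forall>\<Gamma> \<phi> \<psi>. seq_true I \<Gamma> (FImp \<phi> \<psi>) \<longrightarrow> seq_true I (\<Gamma> @ [\<phi>]) \<psi>)"

definition sound_excluded_middle :: "('p form \<Rightarrow> 'a::orthomodular_lattice) \<Rightarrow> bool" where
  "sound_excluded_middle I \<longleftrightarrow> (\<forall>\<Gamma> \<phi> \<psi>. seq_true I (\<Gamma> @ [\<phi>]) \<psi> \<longrightarrow> seq_true I (\<Gamma> @ [FNeg \<phi>]) \<psi> \<longrightarrow> seq_true I \<Gamma> \<psi>)"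

definition sound_explosion :: "('p form \<Rightarrow> 'a::orthomodular_lattice) \<Rightarrow> bool" where
  "sound_explosion I \<longleftrightarrow> (\<forall>\<Gamma> \<phi> \<psi>. seq_true I \<Gamma> (FNeg \<phi>) \<longrightarrow> seq_true I (\<Gamma> @ [\<phi>]) \<psi>)"

definition all_rules_sound :: "('p form \<Rightarrow> 'a::orthomodular_lattice) \<Rightarrow> bool" where
  "all_rules_sound I \<longleftrightarrow> sound_assumption I \<and> sound_cut I \<and> sound_paste I \<and>
     sound_compat_exchange I \<and> sound_and_intro I \<and> sound_and_elim I \<and>
     sound_imp_intro I \<and> sound_imp_elim I \<and> sound_excluded_middle I \<and> sound_explosion I"

end

theory Submission
  imports Defs
begin

context orthomodular_lattice
begin

lemma compl_le_swap: "- x \<le> y \<Longrightarrow> - y \<le> x"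
  by (metis compl_antimono compl_involution)

lemma de_morgan_sup: "- (sup x y) = inf (- x) (- y)"
proof (rule order.antisym)
  show "- sup x y \<le> inf (- x) (- y)" by (simp add: compl_antimono)
  show "inf (- x) (- y) \<le> - sup x y"
  proof -
    have "x \<le> - inf (- x) (- y)" by (metis compl_le_swap compl_involution inf_le1)
    moreover have "y \<le> - inf (- x) (- y)" by (metis compl_le_swap compl_involution inf_le2)
    ultimately have "sup x y \<le> - inf (- x) (- y)" by simp
    thus ?thesis by (metis compl_le_swap compl_involution)
  qed
qed

lemma de_morgan_inf: "- (inf x y) = sup (- x) (- y)"
  by (metis de_morgan_sup compl_involution)

lemma om_dual: "x \<le> y \<Longrightarrow> inf y (sup (- y) x) = x"
proof -
  assume "x \<le> y"
  hence "- y \<le> - x" by (rule compl_antimono)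
  hence "sup (- y) (inf (- (- y)) (- x)) = - x" by (rule orthomodular)
  hence "- sup (- y) (inf y (- x)) = x" by (simp add: compl_involution)
  thus ?thesis by (simp add: de_morgan_sup de_morgan_inf compl_involution)
qed

lemma compl_top: "- top = bot"
  by (metis inf_compl_bot inf_top_left)

lemma neg_char:
  assumes h1: "inf (sup n (- a)) a = bot" and h2: "sup a n = top"
  shows "n = - a"
proof -
  have "- a \<le> sup n (- a)" by simp
  hence "sup (- a) (inf (- (- a)) (sup n (- a))) = sup n (- a)" by (rule orthomodular)
  hence "sup (- a) (inf a (sup n (- a))) = sup n (- a)" by (simp add: compl_involution)
  hence "- a = sup n (- a)" using h1 by (simp add: inf_commute)
  hence nle: "n \<le> - a" by (metis sup.cobounded1)
  hence "sup n (inf (- n) (- a)) = - a" by (rule orthomodular)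
  moreover have "inf (- n) (- a) = bot"
    using h2 by (metis de_morgan_sup compl_top sup_commute)
  ultimately show ?thesis by simp
qed

lemma imp_upper:
  assumes "inf (sup m (- a)) a \<le> b"
  shows "m \<le> sasaki_imp a b"
proof -
  have "- a \<le> sup m (- a)" by simp
  hence e: "sup (- a) (inf a (sup m (- a))) = sup m (- a)"
    using orthomodular[of "- a" "sup m (- a)"] by (simp add: compl_involution)
  have "inf a (sup m (- a)) \<le> inf a b" using assms by (simp add: inf_commute)
  hence "sup (- a) (inf a (sup m (- a))) \<le> sup (- a) (inf a b)"
    using sup_mono by blast
  hence "sup m (- a) \<le> sasaki_imp a b" using e by (simp add: sasaki_imp_def)
  thus ?thesis by simp
qed

lemma imp_lower: "inf (sup (sasaki_imp a b) (- a)) a \<le> b"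
proof -
  have "sup (sasaki_imp a b) (- a) = sup (- a) (inf a b)"
    by (simp add: sasaki_imp_def sup_commute sup_left_commute)
  moreover have "inf a (sup (- a) (inf a b)) = inf a b" by (rule om_dual) simp
  ultimately show ?thesis by (simp add: inf_commute)
qed

end

lemma seq1: "seq_true I [g] \<psi> \<longleftrightarrow> I g \<le> I \<psi>"
  by (simp add: seq_true_def)

lemma seq2: "seq_true I [g, \<phi>] \<psi> \<longleftrightarrow> sasaki_and (I g) (I \<phi>) \<le> I \<psi>"
  by (simp add: seq_true_def)

lemma seq0: "seq_true I [] \<psi> \<longleftrightarrow> top \<le> I \<psi>"
  by (simp add: seq_true_def)

theorem proposition3p4:
  fixes I :: "'p form \<Rightarrow> 'a::orthomodular_lattice"
  assumes "surj I"
    and "all_rules_sound I"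
  shows "\<forall>\<phi> \<psi>. I (FAnd \<phi> \<psi>) = inf (I \<phi>) (I \<psi>)
              \<and> I (FImp \<phi> \<psi>) = sasaki_imp (I \<phi>) (I \<psi>)
              \<and> I (FNeg \<phi>) = - I \<phi>"
proof (intro allI conjI)
  have ex: "\<And>x. \<exists>g. I g = x" using assms(1) by (metis surjD)
  have R: "sound_and_intro I" "sound_and_elim I" "sound_imp_intro I" "sound_imp_elim I"
    "sound_excluded_middle I" "sound_explosion I"
    using assms(2) by (auto simp: all_rules_sound_def)
  fix \<phi> \<psi>
  show "I (FAnd \<phi> \<psi>) = inf (I \<phi>) (I \<psi>)"
  proof (rule antisym)
    have "seq_true I [FAnd \<phi> \<psi>] (FAnd \<phi> \<psi>)" by (simp add: seq1)
    thus "I (FAnd \<phi> \<psi>) \<le> inf (I \<phi>) (I \<psi>)"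
      using R(2) unfolding sound_and_elim_def by (fastforce simp: seq1 simp del: append_Cons append_Nil)
  next
    obtain g where g: "I g = inf (I \<phi>) (I \<psi>)" using ex by blast
    have "seq_true I [g] \<phi>" "seq_true I [g] \<psi>" by (simp_all add: seq1 g)
    hence "seq_true I [g] (FAnd \<phi> \<psi>)" using R(1) unfolding sound_and_intro_def by blast
    thus "inf (I \<phi>) (I \<psi>) \<le> I (FAnd \<phi> \<psi>)" by (simp add: seq1 g)
  qed
  show "I (FImp \<phi> \<psi>) = sasaki_imp (I \<phi>) (I \<psi>)"
  proof (rule antisym)
    have "seq_true I [FImp \<phi> \<psi>] (FImp \<phi> \<psi>)" by (simp add: seq1)
    hence "seq_true I ([FImp \<phi> \<psi>] @ [\<phi>]) \<psi>" using R(4) unfolding sound_imp_elim_def by blast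
    hence "sasaki_and (I (FImp \<phi> \<psi>)) (I \<phi>) \<le> I \<psi>" by (simp add: seq2)
    thus "I (FImp \<phi> \<psi>) \<le> sasaki_imp (I \<phi>) (I \<psi>)"
      by (simp add: sasaki_and_def imp_upper)
  next
    obtain g where g: "I g = sasaki_imp (I \<phi>) (I \<psi>)" using ex by blast
    have "seq_true I ([g] @ [\<phi>]) \<psi>" by (simp add: seq2 g sasaki_and_def imp_lower)
    hence "seq_true I [g] (FImp \<phi> \<psi>)" using R(3) unfolding sound_imp_intro_def by blast
    thus "sasaki_imp (I \<phi>) (I \<psi>) \<le> I (FImp \<phi> \<psi>)" by (simp add: seq1 g)
  qed
  show "I (FNeg \<phi>) = - I \<phi>"
  proof (rule neg_char)
    obtain z where z: "I z = bot" using ex by blast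
    have "seq_true I [FNeg \<phi>] (FNeg \<phi>)" by (simp add: seq1)
    hence "seq_true I ([FNeg \<phi>] @ [\<phi>]) z" using R(6) unfolding sound_explosion_def by blast
    hence "sasaki_and (I (FNeg \<phi>)) (I \<phi>) \<le> bot" by (simp add: seq2 z)
    thus "inf (sup (I (FNeg \<phi>)) (- I \<phi>)) (I \<phi>) = bot"
      by (simp add: sasaki_and_def bot_unique)
  next
    obtain t where t: "I t = sup (I \<phi>) (I (FNeg \<phi>))" using ex by blast
    have "seq_true I ([] @ [\<phi>]) t" by (simp add: seq_true_def t)
    moreover have "seq_true I ([] @ [FNeg \<phi>]) t" by (simp add: seq_true_def t)
    ultimately have "seq_true I [] t" using R(5) unfolding sound_excluded_middle_def by blast
    thus "sup (I \<phi>) (I (FNeg \<phi>)) = top" by (simp add: seq0 t top_unique)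
  qed
qed

end
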